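(* Let $d\ge 1$, let $L:\mathbb{R}^d\times\mathbb{R}^{d+1}\to\mathbb{R}$ be a loss function such that $L(w,z)$ is convex in $w$ for every $z$, and let $\nabla_1 L(w,z)$ denote a (fixed choice of) sub-gradient of $L(\cdot,z)$ at $w$. Assume there are constants $A,B\ge 0$ such that $\|\nabla_1 L(w,z)\|^2\le A\,L(w,z)+B$ for all $w\in\mathbb{R}^d$ and $z\in\mathbb{R}^{d+1}$. Let $\eta>0$ with $1-0.5A\eta\neq 0$, let $\theta\in[0,\infty]$, let $g_1,g_2,\ldots\ge 0$ be gravity parameters, and let $z_1,z_2,\ldots\in\mathbb{R}^{d+1}$ be an arbitrary sequence. Define $w_1=0$ and, for $i\ge 1$, \[ w_{i+1}=T_1\big(w_i-\eta\nabla_1 L(w_i,z_i),\ \eta g_i,\ \theta\big). \] Then for every $T\ge 1$ and every $\bar w\in\mathbb{R}^d$, \[ \frac{1-0.5A\eta}{T}\sum_{i=1}^T\left[L(w_i,z_i)+\frac{g_i}{1-0.5A\eta}\,\|w_{i+1}\cdot I(|w_{i+1}|\le\theta)\|_1\right] \le \frac{\eta}{2}B+\frac{\|\bar w\|^2}{2\eta T}+\frac1T\sum_{i=1}^T\Big[L(\bar w,z_i)+g_i\,\|\bar w\cdot I(|w_{i+1}|\le\theta)\|_1\Big]. \]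
   Context: $\|\cdot\|$ is the Euclidean norm and $\|\cdot\|_1$ the $1$-norm. For $v=(v_1,\dots,v_d)\in\mathbb{R}^d$, $\alpha\ge 0$ and $\theta\in[0,\infty]$, the truncation operator is $T_1(v,\alpha,\theta)=(T_1(v_1,\alpha,\theta),\dots,T_1(v_d,\alpha,\theta))$ with $T_1(v_j,\alpha,\theta)=\max(0,v_j-\alpha)$ if $v_j\in[0,\theta]$, $=\min(0,v_j+\alpha)$ if $v_j\in[-\theta,0]$, and $=v_j$ otherwise. For vectors $v,v'\in\mathbb{R}^d$, $\|v\cdot I(|v'|\le\theta)\|_1:=\sum_{j=1}^d |v_j|\,I(|v'_j|\le\theta)$, where $I(\cdot)$ is the indicator function. *)

theory Defs
  imports "HOL-Analysis.Analysis"
begin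

definition trunc1 :: "real \<Rightarrow> real \<Rightarrow> ereal \<Rightarrow> real" where
  "trunc1 v \<alpha> \<theta> =
     (if 0 \<le> v \<and> ereal v \<le> \<theta> then max 0 (v - \<alpha>)
      else if v \<le> 0 \<and> ereal (- v) \<le> \<theta> then min 0 (v + \<alpha>)
      else v)"

definition Trunc1 :: "real ^ 'n \<Rightarrow> real \<Rightarrow> ereal \<Rightarrow> real ^ 'n" where
  "Trunc1 v \<alpha> \<theta> = (\<chi> j. trunc1 (v $ j) \<alpha> \<theta>)"

definition masked_norm1 :: "real ^ 'n \<Rightarrow> real ^ 'n \<Rightarrow> ereal \<Rightarrow> real" where
  "masked_norm1 v v' \<theta> = (\<Sum>j\<in>UNIV. \<bar>v $ j\<bar> * (if ereal \<bar>v' $ j\<bar> \<le> \<theta> then 1 else 0))"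

definition is_subgradient :: "(real ^ 'n \<Rightarrow> real) \<Rightarrow> real ^ 'n \<Rightarrow> real ^ 'n \<Rightarrow> bool" where
  "is_subgradient f w g \<longleftrightarrow> (\<forall>v. f v \<ge> f w + g \<bullet> (v - w))"

end

theory Submission
  imports Defs
begin



lemma coord:
  fixes v a b :: real and \<theta> :: ereal
  assumes a: "a \<ge> 0" and th: "\<theta> \<ge> 0"
  shows "(trunc1 v a \<theta> - b)\<^sup>2 + 2*a*(\<bar>trunc1 v a \<theta>\<bar> * (if ereal \<bar>trunc1 v a \<theta>\<bar> \<le> \<theta> then 1 else 0))
     \<le> (v - b)\<^sup>2 + 2*a*(\<bar>b\<bar> * (if ereal \<bar>trunc1 v a \<theta>\<bar> \<le> \<theta> then 1 else 0))"
proof (cases "0 \<le> v \<and> ereal v \<le> \<theta>")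
  case True
  have u: "trunc1 v a \<theta> = max 0 (v - a)" using True unfolding trunc1_def by simp
  have "\<bar>max 0 (v - a)\<bar> \<le> v" using True a by simp
  then have "ereal \<bar>max 0 (v - a)\<bar> \<le> ereal v" by simp
  then have m: "ereal \<bar>trunc1 v a \<theta>\<bar> \<le> \<theta>" using True u by (metis order_trans)
  have ab: "a * b \<le> a * \<bar>b\<bar>" using a by (simp add: mult_left_mono)
  have "(max 0 (v - a) - b)\<^sup>2 + 2*a*\<bar>max 0 (v - a)\<bar> \<le> (v - b)\<^sup>2 + 2*a*\<bar>b\<bar>"
  proof (cases "v \<ge> a")
    case True
    have e1: "max 0 (v - a) = v - a" using True by simp
    have e2: "(v - a - b)\<^sup>2 = (v - b)\<^sup>2 - 2*a*(v - b) + a\<^sup>2" by (simp add: power2_eq_square algebra_simps)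
    have e3: "\<bar>v - a\<bar> = v - a" using True by simp
    have "0 \<le> a\<^sup>2" by simp
    have aa: "0 \<le> a * a" using a by simp
    have "a * (b * 2) \<le> a * a + a * (\<bar>b\<bar> * 2)" using ab aa by linarith
    then show ?thesis unfolding e1 e2 e3 by (simp add: algebra_simps power2_eq_square)
  next
    case False
    have e1: "max 0 (v - a) = 0" using False by simp
    have vb: "v * b \<le> a * \<bar>b\<bar>"
    proof -
      have "v * b \<le> v * \<bar>b\<bar>" using True by (simp add: mult_left_mono)
      also have "\<dots> \<le> a * \<bar>b\<bar>" using False by (simp add: mult_right_mono)
      finally show ?thesis .
    qed
    have e2: "(v - b)\<^sup>2 = v\<^sup>2 - 2 * (v * b) + b\<^sup>2" by (simp add: power2_eq_square algebra_simps)
    have "0 \<le> v\<^sup>2" by simp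
    then show ?thesis unfolding e1 e2 using vb by simp
  qed
  then show ?thesis using u m by simp
next
  case F1: False
  show ?thesis
  proof (cases "v \<le> 0 \<and> ereal (- v) \<le> \<theta>")
    case True
    have u: "trunc1 v a \<theta> = min 0 (v + a)" unfolding trunc1_def by (subst if_not_P[OF F1]) (simp add: True)
    have "\<bar>min 0 (v + a)\<bar> \<le> -v" using True a by simp
    then have "ereal \<bar>min 0 (v + a)\<bar> \<le> ereal (-v)" by simp
    then have m: "ereal \<bar>trunc1 v a \<theta>\<bar> \<le> \<theta>" using True u by (metis order_trans)
    have ab: "- (a * b) \<le> a * \<bar>b\<bar>" using mult_left_mono[OF abs_ge_minus_self a, of b] by simp
    have "(min 0 (v + a) - b)\<^sup>2 + 2*a*\<bar>min 0 (v + a)\<bar> \<le> (v - b)\<^sup>2 + 2*a*\<bar>b\<bar>"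
    proof (cases "-v \<ge> a")
      case True
      have e1: "min 0 (v + a) = v + a" using True by simp
      have e2: "(v + a - b)\<^sup>2 = (v - b)\<^sup>2 + 2*a*(v - b) + a\<^sup>2" by (simp add: power2_eq_square algebra_simps)
      have e3: "\<bar>v + a\<bar> = - (v + a)" using True by simp
      have "0 \<le> a\<^sup>2" by simp
      then show ?thesis unfolding e1 e2 e3 using ab mult_nonneg_nonneg[OF a a] by (simp add: algebra_simps power2_eq_square)
    next
      case False
      have e1: "min 0 (v + a) = 0" using False by simp
      have vb: "v * b \<le> a * \<bar>b\<bar>"
      proof -
        have "v * b \<le> \<bar>v * b\<bar>" by (rule abs_ge_self)
        also have "\<dots> = - v * \<bar>b\<bar>" using True by (simp add: abs_mult)
        also have "\<dots> \<le> a * \<bar>b\<bar>" using False by (intro mult_right_mono) auto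
        finally show ?thesis .
      qed
      have e2: "(v - b)\<^sup>2 = v\<^sup>2 - 2 * (v * b) + b\<^sup>2" by (simp add: power2_eq_square algebra_simps)
      have "0 \<le> v\<^sup>2" by simp
      then have "0 \<le> v\<^sup>2 + (2 * (a * \<bar>b\<bar>) - 2 * (v * b))" using vb by linarith
      then show ?thesis unfolding e1 e2 by simp
    qed
    then show ?thesis using u m by simp
  next
    case False
    have u: "trunc1 v a \<theta> = v" unfolding trunc1_def by (subst if_not_P[OF F1], subst if_not_P[OF False]) (rule refl)
    have "\<not> ereal \<bar>v\<bar> \<le> \<theta>"
    proof (cases "v \<ge> 0")
      case True then show ?thesis using F1 by simp
    next
      case False then show ?thesis using F1 \<open>\<not> (v \<le> 0 \<and> ereal (- v) \<le> \<theta>)\<close> by simp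
    qed
    then show ?thesis using u by simp
  qed
qed


lemma norm_sq_vec: "(norm (x::real^'n))\<^sup>2 = (\<Sum>j\<in>UNIV. (x$j)\<^sup>2)"
  by (simp only: power2_norm_eq_inner) (simp add: inner_vec_def power2_eq_square)

lemma step_trunc:
  fixes v b :: "real^'n" and a :: real and \<theta> :: ereal
  assumes a: "a \<ge> 0" and th: "\<theta> \<ge> 0"
  shows "(norm (Trunc1 v a \<theta> - b))\<^sup>2 + 2*a*masked_norm1 (Trunc1 v a \<theta>) (Trunc1 v a \<theta>) \<theta>
     \<le> (norm (v - b))\<^sup>2 + 2*a*masked_norm1 b (Trunc1 v a \<theta>) \<theta>"
proof -
  have "(\<Sum>j\<in>UNIV. (trunc1 (v$j) a \<theta> - b$j)\<^sup>2 + 2*a*(\<bar>trunc1 (v$j) a \<theta>\<bar> * (if ereal \<bar>trunc1 (v$j) a \<theta>\<bar> \<le> \<theta> then 1 else 0)))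
     \<le> (\<Sum>j\<in>UNIV. (v$j - b$j)\<^sup>2 + 2*a*(\<bar>b$j\<bar> * (if ereal \<bar>trunc1 (v$j) a \<theta>\<bar> \<le> \<theta> then 1 else 0)))"
    by (rule sum_mono) (rule coord[OF a th])
  then show ?thesis
    by (simp add: norm_sq_vec masked_norm1_def Trunc1_def sum.distrib sum_distrib_left)
qed

theorem theorem1:
  fixes L :: "real ^ 'n \<Rightarrow> real ^ 'm \<Rightarrow> real"
    and grad :: "real ^ 'n \<Rightarrow> real ^ 'm \<Rightarrow> real ^ 'n"
    and A B \<eta> :: real and \<theta> :: ereal
    and g :: "nat \<Rightarrow> real" and z :: "nat \<Rightarrow> real ^ 'm"
    and w :: "nat \<Rightarrow> real ^ 'n"
    and T :: nat and wbar :: "real ^ 'n"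
  assumes dim: "CARD('m) = CARD('n) + 1"
    and conv: "\<And>zz. convex_on UNIV (\<lambda>v. L v zz)"
    and subg: "\<And>v zz. is_subgradient (\<lambda>u. L u zz) v (grad v zz)"
    and A: "A \<ge> 0" and B: "B \<ge> 0"
    and growth: "\<And>v zz. (norm (grad v zz))\<^sup>2 \<le> A * L v zz + B"
    and eta: "\<eta> > 0" and eta_ne: "1 - 0.5 * A * \<eta> \<noteq> 0"
    and theta: "\<theta> \<ge> 0"
    and g_nonneg: "\<And>i. i \<ge> 1 \<Longrightarrow> g i \<ge> 0"
    and w1: "w 1 = 0"
    and wstep: "\<And>i. i \<ge> 1 \<Longrightarrow>
        w (Suc i) = Trunc1 (w i - \<eta> *\<^sub>R grad (w i) (z i)) (\<eta> * g i) \<theta>"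
    and T: "T \<ge> 1"
  shows "(1 - 0.5 * A * \<eta>) / real T *
           (\<Sum>i=1..T. L (w i) (z i)
              + g i / (1 - 0.5 * A * \<eta>) * masked_norm1 (w (Suc i)) (w (Suc i)) \<theta>)
         \<le> \<eta> / 2 * B + (norm wbar)\<^sup>2 / (2 * \<eta> * real T)
           + 1 / real T * (\<Sum>i=1..T. L wbar (z i) + g i * masked_norm1 wbar (w (Suc i)) \<theta>)"
proof -
  define c where "c = 1 - 0.5 * A * \<eta>"
  define D where "D i = (norm (w i - wbar))\<^sup>2" for i
  define mn where "mn i = masked_norm1 (w (Suc i)) (w (Suc i)) \<theta>" for i
  define mb where "mb i = masked_norm1 wbar (w (Suc i)) \<theta>" for i
  have step: "D (Suc i) + 2*\<eta>*(c * L (w i) (z i) + g i * mn i)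
      \<le> D i + 2*\<eta>*(L wbar (z i) + g i * mb i) + \<eta>^2 * B" if i: "i \<ge> 1" for i
  proof -
    let ?G = "grad (w i) (z i)"
    let ?v = "w i - \<eta> *\<^sub>R ?G"
    have a: "\<eta> * g i \<ge> 0" using eta g_nonneg[OF i] by simp
    have t: "D (Suc i) + 2*(\<eta>*g i)*mn i \<le> (norm (?v - wbar))\<^sup>2 + 2*(\<eta>*g i)*mb i"
      using step_trunc[OF a theta, of ?v wbar] wstep[OF i] unfolding D_def mn_def mb_def by simp
    have e: "(norm (?v - wbar))\<^sup>2 = D i - 2*\<eta>*(?G \<bullet> (w i - wbar)) + \<eta>^2 * (norm ?G)\<^sup>2"
    proof -
      have "?v - wbar = (w i - wbar) - \<eta> *\<^sub>R ?G" by simp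
      then show ?thesis unfolding D_def power2_norm_eq_inner
        by (simp add: inner_diff_left inner_diff_right inner_commute algebra_simps power2_eq_square)
    qed
    have sg: "L wbar (z i) \<ge> L (w i) (z i) + ?G \<bullet> (wbar - w i)"
      using subg[where v="w i" and zz="z i"] unfolding is_subgradient_def by blast
    have sg2: "?G \<bullet> (wbar - w i) = - (?G \<bullet> (w i - wbar))"
      by (simp add: inner_diff_right)
    have gr: "\<eta>^2 * (norm ?G)\<^sup>2 \<le> \<eta>^2 * (A * L (w i) (z i) + B)"
      using growth by (simp add: mult_left_mono)
    define X where "X = ?G \<bullet> (w i - wbar)"
    define N where "N = (norm ?G)\<^sup>2"
    define Li where "Li = L (w i) (z i)"
    define Lb where "Lb = L wbar (z i)"
    have m1: "\<eta> * (- X) \<le> \<eta> * (Lb - Li)"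
      using sg sg2 eta unfolding X_def Li_def Lb_def by (intro mult_left_mono) auto
    have gr2: "\<eta>^2 * N \<le> \<eta>^2 * A * Li + \<eta>^2 * B"
      using gr unfolding N_def Li_def by (simp add: algebra_simps)
    have t2: "D (Suc i) + 2*(\<eta>*g i)*mn i \<le> D i - 2*\<eta>*X + \<eta>^2 * N + 2*(\<eta>*g i)*mb i"
      using t e unfolding X_def N_def by simp
    have ce: "2*\<eta>*(c * Li + g i * mn i) = 2*(\<eta>*Li) - \<eta>^2*A*Li + 2*(\<eta>*g i)*mn i"
      unfolding c_def by (simp add: algebra_simps power2_eq_square)
    have cb: "2*\<eta>*(Lb + g i * mb i) = 2*(\<eta>*Lb) + 2*(\<eta>*g i)*mb i"
      by (simp add: algebra_simps)
    have m2: "- (\<eta> * X) \<le> \<eta> * Lb - \<eta> * Li" using m1 by (simp add: algebra_simps)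
    have "D (Suc i) + 2*\<eta>*(c * Li + g i * mn i) \<le> D i + 2*\<eta>*(Lb + g i * mb i) + \<eta>^2 * B"
      unfolding ce cb using t2 gr2 m2 by (simp add: algebra_simps)
    then show ?thesis unfolding Li_def Lb_def .
  qed
  have sum_step: "(\<Sum>i=1..T. D (Suc i) + 2*\<eta>*(c * L (w i) (z i) + g i * mn i))
      \<le> (\<Sum>i=1..T. D i + 2*\<eta>*(L wbar (z i) + g i * mb i) + \<eta>^2 * B)"
    by (rule sum_mono) (use step in auto)
  have tel: "(\<Sum>i=1..T. D (Suc i) - D i) = D (Suc T) - D 1"
    by (rule sum_Suc_diff) (use T in simp)
  define S1 where "S1 = (\<Sum>i=1..T. c * L (w i) (z i) + g i * mn i)"
  define S2 where "S2 = (\<Sum>i=1..T. L wbar (z i) + g i * mb i)"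
  have "(\<Sum>i=1..T. D (Suc i) - D i) + 2*\<eta>*S1 \<le> 2*\<eta>*S2 + real T * \<eta>^2 * B"
    using sum_step unfolding S1_def S2_def
    by (simp add: sum.distrib sum_subtractf sum_distrib_left algebra_simps)
  then have key: "2*\<eta>*S1 \<le> (norm wbar)\<^sup>2 + 2*\<eta>*S2 + real T * \<eta>^2 * B"
    using tel unfolding D_def using w1 by simp (smt (verit) zero_le_power2)
  have lhs: "c / real T * (\<Sum>i=1..T. L (w i) (z i) + g i / c * mn i) = S1 / real T"
  proof -
    have "c * (\<Sum>i=1..T. L (w i) (z i) + g i / c * mn i) = S1"
      unfolding S1_def sum_distrib_left using eta_ne unfolding c_def
      by (intro sum.cong) (auto simp: field_simps)
    then show ?thesis by simp
  qed
  have Tp: "real T > 0" using T by simp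
  have "S1 / real T \<le> \<eta> / 2 * B + (norm wbar)\<^sup>2 / (2 * \<eta> * real T) + 1 / real T * S2"
  proof -
    have "S1 \<le> ((norm wbar)\<^sup>2 + 2*\<eta>*S2 + real T * \<eta>^2 * B) / (2*\<eta>)"
      using key eta by (simp add: field_simps)
    then have "S1 / real T \<le> ((norm wbar)\<^sup>2 + 2*\<eta>*S2 + real T * \<eta>^2 * B) / (2*\<eta>) / real T"
      by (rule divide_right_mono) (use Tp in simp)
    also have "\<dots> = \<eta> / 2 * B + (norm wbar)\<^sup>2 / (2 * \<eta> * real T) + 1 / real T * S2"
      using Tp eta by (simp add: field_simps power2_eq_square)
    finally show ?thesis .
  qed
  then have fin: "c / real T * (\<Sum>i=1..T. L (w i) (z i) + g i / c * mn i) \<le> \<eta> / 2 * B + (norm wbar)\<^sup>2 / (2 * \<eta> * real T) + 1 / real T * S2"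
    unfolding lhs .
  show ?thesis using fin unfolding c_def mn_def S2_def mb_def .
qed

end
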